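(* Let $U:\mathbb{R}^d\to\mathbb{R}$ be twice continuously differentiable. For all $q_0,p_0\in\mathbb{R}^d$ and $h>0$, writing $(q_1,p_1)=\Phi_h(q_0,p_0)$ and $q_t=q_0+t(q_1-q_0)$ for $t\in[0,1]$, $$\begin{aligned}H(\Phi_h(q_0,p_0))-H(q_0,p_0)&=h^2\int_0^1\langle p_0,\nabla^2U(q_t)p_0\rangle(1/2-t)\,dt+h^3\int_0^1\langle p_0,\nabla^2U(q_t)\nabla U(q_0)\rangle(t-1/4)\,dt\\&\quad-\frac{h^4}{4}\int_0^1\langle\nabla U(q_0),\nabla^2U(q_t)\nabla U(q_0)\rangle\,t\,dt+\frac{h^4}{8}\Big\|\int_0^1\nabla^2U(q_t)p_0\,dt\Big\|^2\\&\quad-\frac{h^5}{8}\Big\langle\int_0^1\nabla^2U(q_t)\nabla U(q_0)\,dt,\int_0^1\nabla^2U(q_t)p_0\,dt\Big\rangle+\frac{h^6}{32}\Big\|\int_0^1\nabla^2U(q_t)\nabla U(q_0)\,dt\Big\|^2.\end{aligned}$$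
   Context: $H(q,p)=U(q)+\|p\|^2/2$. The leapfrog map is $\Phi_h=\Psi^{(1)}_h\circ\Psi^{(2)}_h\circ\Psi^{(1)}_h$ with $\Psi^{(1)}_h(q,p)=(q,p-(h/2)\nabla U(q))$ and $\Psi^{(2)}_h(q,p)=(q+hp,p)$, i.e. $q_1=q_0+hp_0-(h^2/2)\nabla U(q_0)$ and $p_1=p_0-(h/2)(\nabla U(q_0)+\nabla U(q_1))$. *)

theory Defs
  imports "HOL-Analysis.Analysis"
begin

definition ham :: "('a::real_normed_vector \<Rightarrow> real) \<Rightarrow> 'a \<times> 'a \<Rightarrow> real" where
  "ham U = (\<lambda>(q, p). U q + (norm p)^2 / 2)"

definition kick :: "('a::real_vector \<Rightarrow> 'a) \<Rightarrow> real \<Rightarrow> 'a \<times> 'a \<Rightarrow> 'a \<times> 'a" where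
  "kick gU h = (\<lambda>(q, p). (q, p - (h / 2) *\<^sub>R gU q))"

definition drift :: "real \<Rightarrow> 'a::real_vector \<times> 'a \<Rightarrow> 'a \<times> 'a" where
  "drift h = (\<lambda>(q, p). (q + h *\<^sub>R p, p))"

definition leapfrog :: "('a::real_vector \<Rightarrow> 'a) \<Rightarrow> real \<Rightarrow> 'a \<times> 'a \<Rightarrow> 'a \<times> 'a" where
  "leapfrog gU h = kick gU h \<circ> drift h \<circ> kick gU h"

end

theory Submission
  imports Defs
begin

lemma line_deriv_U:
  fixes U :: "'a::real_inner \<Rightarrow> real"
  assumes grad: "\<And>x. (U has_derivative (\<lambda>v. gU x \<bullet> v)) (at x)"
  shows "((\<lambda>s. U (c + s *\<^sub>R u)) has_real_derivative (gU (c + s *\<^sub>R u) \<bullet> u)) (at s within S)"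
proof -
  have "((\<lambda>s. c + s *\<^sub>R u) has_derivative (\<lambda>k. k *\<^sub>R u)) (at s within S)"
    by (auto intro!: derivative_eq_intros)
  from has_derivative_compose[OF this grad]
  have "((\<lambda>s. U (c + s *\<^sub>R u)) has_derivative (\<lambda>k. gU (c + s *\<^sub>R u) \<bullet> (k *\<^sub>R u))) (at s within S)"
    by (simp add: o_def)
  moreover have "(\<lambda>k. gU (c + s *\<^sub>R u) \<bullet> (k *\<^sub>R u)) = (*) (gU (c + s *\<^sub>R u) \<bullet> u)"
    by (auto simp: mult.commute)
  ultimately show ?thesis by (simp add: has_field_derivative_def)
qed

lemma line_deriv_gU:
  fixes gU :: "real^'n \<Rightarrow> real^'n"
  assumes hess: "\<And>x. (gU has_derivative (\<lambda>v. HU x *v v)) (at x)"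
  shows "((\<lambda>s. gU (c + s *\<^sub>R u) \<bullet> w) has_real_derivative ((HU (c + s *\<^sub>R u) *v u) \<bullet> w)) (at s within S)"
proof -
  have "((\<lambda>s. c + s *\<^sub>R u) has_derivative (\<lambda>k. k *\<^sub>R u)) (at s within S)"
    by (auto intro!: derivative_eq_intros)
  from has_derivative_compose[OF this hess]
  have "((\<lambda>s. gU (c + s *\<^sub>R u)) has_derivative (\<lambda>k. HU (c + s *\<^sub>R u) *v (k *\<^sub>R u))) (at s within S)"
    by (simp add: o_def)
  then have "((\<lambda>s. gU (c + s *\<^sub>R u) \<bullet> w) has_derivative (\<lambda>k. (HU (c + s *\<^sub>R u) *v (k *\<^sub>R u)) \<bullet> w)) (at s within S)"
    by (auto intro!: derivative_eq_intros)
  moreover have "(\<lambda>k. (HU (c + s *\<^sub>R u) *v (k *\<^sub>R u)) \<bullet> w) = (*) ((HU (c + s *\<^sub>R u) *v u) \<bullet> w)"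
    by (auto simp: matrix_vector_mult_scaleR mult.commute)
  ultimately show ?thesis by (simp add: has_field_derivative_def)
qed

lemma delta_mvt:
  fixes U :: "real^'n \<Rightarrow> real" and gU :: "real^'n \<Rightarrow> real^'n"
  assumes grad: "\<And>x. (U has_derivative (\<lambda>v. gU x \<bullet> v)) (at x)"
    and hess: "\<And>x. (gU has_derivative (\<lambda>v. HU x *v v)) (at x)"
    and e: "e > 0"
  shows "\<exists>y. norm (y - x) \<le> e * (norm u + norm v) \<and>
     U (x + e *\<^sub>R u + e *\<^sub>R v) - U (x + e *\<^sub>R u) - U (x + e *\<^sub>R v) + U x = e^2 * ((HU y *v v) \<bullet> u)"
proof -
  define \<Phi> where "\<Phi> = (\<lambda>s. U ((x + e *\<^sub>R v) + s *\<^sub>R u) - U (x + s *\<^sub>R u))"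
  have "\<And>s. (\<Phi> has_real_derivative (gU ((x + e *\<^sub>R v) + s *\<^sub>R u) \<bullet> u - gU (x + s *\<^sub>R u) \<bullet> u)) (at s)"
    unfolding \<Phi>_def by (intro DERIV_diff line_deriv_U[OF grad])
  from MVT2[OF e this] obtain \<xi> where \<xi>: "0 < \<xi>" "\<xi> < e"
    and eq1: "\<Phi> e - \<Phi> 0 = (e - 0) * (gU ((x + e *\<^sub>R v) + \<xi> *\<^sub>R u) \<bullet> u - gU (x + \<xi> *\<^sub>R u) \<bullet> u)"
    by blast
  define \<Psi> where "\<Psi> = (\<lambda>t. gU ((x + \<xi> *\<^sub>R u) + t *\<^sub>R v) \<bullet> u)"
  have "\<And>t. (\<Psi> has_real_derivative ((HU ((x + \<xi> *\<^sub>R u) + t *\<^sub>R v) *v v) \<bullet> u)) (at t)"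
    unfolding \<Psi>_def by (rule line_deriv_gU[OF hess])
  from MVT2[OF e this] obtain \<eta> where \<eta>: "0 < \<eta>" "\<eta> < e"
    and eq2: "\<Psi> e - \<Psi> 0 = (e - 0) * ((HU ((x + \<xi> *\<^sub>R u) + \<eta> *\<^sub>R v) *v v) \<bullet> u)"
    by blast
  define y where "y = (x + \<xi> *\<^sub>R u) + \<eta> *\<^sub>R v"
  have "norm (y - x) \<le> norm (\<xi> *\<^sub>R u) + norm (\<eta> *\<^sub>R v)"
    unfolding y_def by (simp add: norm_triangle_ineq del: norm_scaleR)
  also have "\<dots> \<le> e * norm u + e * norm v"
    using \<xi> \<eta> by (intro add_mono) (auto intro!: mult_right_mono)
  finally have n: "norm (y - x) \<le> e * (norm u + norm v)" by (simp add: algebra_simps)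
  have "U (x + e *\<^sub>R u + e *\<^sub>R v) - U (x + e *\<^sub>R u) - U (x + e *\<^sub>R v) + U x = \<Phi> e - \<Phi> 0"
    unfolding \<Phi>_def by (simp add: add_ac)
  also have "\<dots> = e * (\<Psi> e - \<Psi> 0)"
    unfolding eq1 \<Psi>_def by (simp add: add_ac)
  also have "\<dots> = e^2 * ((HU y *v v) \<bullet> u)"
    unfolding eq2 y_def by (simp add: power2_eq_square)
  finally show ?thesis using n by blast
qed

lemma cont_Hv:
  fixes HU :: "'a::topological_space \<Rightarrow> real^'n^'n"
  assumes "continuous_on S HU"
  shows "continuous_on S (\<lambda>x. HU x *v v)"
  unfolding matrix_mult_dot
  by (intro continuous_on_vec_lambda continuous_intros assms)

lemma hess_sym:
  fixes U :: "real^'n \<Rightarrow> real" and gU :: "real^'n \<Rightarrow> real^'n"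
  assumes grad: "\<And>x. (U has_derivative (\<lambda>v. gU x \<bullet> v)) (at x)"
    and hess: "\<And>x. (gU has_derivative (\<lambda>v. HU x *v v)) (at x)"
    and cont: "continuous_on UNIV HU"
  shows "(HU x *v v) \<bullet> u = (HU x *v u) \<bullet> v"
proof -
  define e where "e = (\<lambda>n. inverse (real (Suc n)))"
  define C where "C = norm u + norm v"
  have "\<forall>n. \<exists>y z. norm (y - x) \<le> e n * C \<and> norm (z - x) \<le> e n * C \<and> (HU y *v v) \<bullet> u = (HU z *v u) \<bullet> v"
  proof
    fix n
    have en: "e n > 0" unfolding e_def by simp
    obtain y where y: "norm (y - x) \<le> e n * C"
      "U (x + e n *\<^sub>R u + e n *\<^sub>R v) - U (x + e n *\<^sub>R u) - U (x + e n *\<^sub>R v) + U x = (e n)^2 * ((HU y *v v) \<bullet> u)"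
      using delta_mvt[OF grad hess en, of x u v] unfolding C_def by blast
    obtain z where z: "norm (z - x) \<le> e n * C"
      "U (x + e n *\<^sub>R v + e n *\<^sub>R u) - U (x + e n *\<^sub>R v) - U (x + e n *\<^sub>R u) + U x = (e n)^2 * ((HU z *v u) \<bullet> v)"
      using delta_mvt[OF grad hess en, of x v u] unfolding C_def by (auto simp: add_ac)
    have "(e n)^2 * ((HU y *v v) \<bullet> u) = (e n)^2 * ((HU z *v u) \<bullet> v)"
      proof -
      have eqU: "x + e n *\<^sub>R v + e n *\<^sub>R u = x + e n *\<^sub>R u + e n *\<^sub>R v" by (simp add: add_ac)
      show ?thesis using y(2) z(2) unfolding eqU by linarith
    qed
    then have "(HU y *v v) \<bullet> u = (HU z *v u) \<bullet> v" using en by simp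
    then show "\<exists>y z. norm (y - x) \<le> e n * C \<and> norm (z - x) \<le> e n * C \<and> (HU y *v v) \<bullet> u = (HU z *v u) \<bullet> v"
      using y(1) z(1) by blast
  qed
  then obtain Y Z where YZ: "\<And>n. norm (Y n - x) \<le> e n * C" "\<And>n. norm (Z n - x) \<le> e n * C"
    "\<And>n. (HU (Y n) *v v) \<bullet> u = (HU (Z n) *v u) \<bullet> v"
    by metis
  have e0: "(\<lambda>n. e n * C) \<longlonglongrightarrow> 0"
    unfolding e_def by (intro tendsto_mult_left_zero LIMSEQ_inverse_real_of_nat)
  have Y: "Y \<longlonglongrightarrow> x"
    by (rule LIM_zero_cancel, rule Lim_null_comparison[OF _ e0]) (use YZ in auto)
  have Z: "Z \<longlonglongrightarrow> x"
    by (rule LIM_zero_cancel, rule Lim_null_comparison[OF _ e0]) (use YZ in auto)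
  have c1: "continuous_on UNIV (\<lambda>y. (HU y *v v) \<bullet> u)"
    by (intro continuous_intros cont_Hv cont)
  have c2: "continuous_on UNIV (\<lambda>y. (HU y *v u) \<bullet> v)"
    by (intro continuous_intros cont_Hv cont)
  have l1: "(\<lambda>n. (HU (Y n) *v v) \<bullet> u) \<longlonglongrightarrow> (HU x *v v) \<bullet> u"
    using continuous_on_tendsto_compose[OF c1 Y] by simp
  have l2: "(\<lambda>n. (HU (Y n) *v v) \<bullet> u) \<longlonglongrightarrow> (HU x *v u) \<bullet> v"
    using continuous_on_tendsto_compose[OF c2 Z] YZ(3) by simp
  show ?thesis using LIMSEQ_unique[OF l1 l2] .
qed


lemma cont_int:
  fixes f :: "real \<Rightarrow> 'b::euclidean_space"
  assumes "continuous_on UNIV f"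
  shows "(f has_integral integral {0..1} f) {0..1}"
  by (rule integrable_integral, rule integrable_continuous_interval, rule continuous_on_subset[OF assms]) auto

lemma lin_int:
  fixes f :: "real \<Rightarrow> real"
  assumes "(f has_integral I0) {0..1}" "((\<lambda>t. f t * t) has_integral I1) {0..1}"
    and "\<And>t. k t = \<alpha> + \<beta> * t"
  shows "((\<lambda>t. f t * k t) has_integral (\<alpha> * I0 + \<beta> * I1)) {0..1}"
proof -
  have "((\<lambda>t. \<alpha> * f t + \<beta> * (f t * t)) has_integral (\<alpha> * I0 + \<beta> * I1)) {0..1}"
    by (intro has_integral_add has_integral_mult_right assms)
  moreover have "(\<lambda>t. \<alpha> * f t + \<beta> * (f t * t)) = (\<lambda>t. f t * k t)"
    by (auto simp: assms(3) algebra_simps)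
  ultimately show ?thesis by simp
qed

lemma quad4:
  fixes x y z w :: "'a::real_inner"
  shows "(x - a *\<^sub>R y - b *\<^sub>R z + c *\<^sub>R w) \<bullet> (x - a *\<^sub>R y - b *\<^sub>R z + c *\<^sub>R w)
   = x \<bullet> x + a^2 * (y \<bullet> y) + b^2 * (z \<bullet> z) + c^2 * (w \<bullet> w) - 2*a*(x \<bullet> y) - 2*b*(x \<bullet> z)
     + 2*c*(x \<bullet> w) + 2*a*b*(y \<bullet> z) - 2*a*c*(y \<bullet> w) - 2*b*c*(z \<bullet> w)"
  by (simp add: inner_diff_left inner_diff_right inner_add_left inner_add_right inner_commute[of y x]
      inner_commute[of z x] inner_commute[of w x] inner_commute[of z y] inner_commute[of w y] inner_commute[of w z]
      power2_eq_square algebra_simps)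

lemma arith_final:
  fixes h :: real
  shows "Uq1 = Uq0 + (h * gp - h^2/2 * gg) + (h^2 * (A0 - A1) - h^3 * (B0 - B1) + h^4/4 * (C0 - C1)) \<Longrightarrow>
  p1p1 = pp + h^2*gg + (h^2/2)^2*PP + (h^3/4)^2*GG - 2*h*gp - 2*(h^2/2)*A0 + 2*(h^3/4)*B0 + 2*h*(h^2/2)*B0 - 2*h*(h^3/4)*C0 - 2*(h^2/2)*(h^3/4)*PG \<Longrightarrow>
  Uq1 + p1p1 / 2 - (Uq0 + pp / 2)
     = h^2 * (1/2 * A0 + (-1) * A1) + h^3 * ((-1/4) * B0 + 1 * B1) - h^4/4 * C1
       + h^4/8 * PP - h^5/8 * PG + h^6/32 * GG"
  by (simp add: field_simps eval_nat_numeral)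

theorem lemma15:
  fixes U :: "real^'n \<Rightarrow> real"
    and gU :: "real^'n \<Rightarrow> real^'n"
    and HU :: "real^'n \<Rightarrow> real^'n^'n"
    and q0 p0 :: "real^'n" and h :: real
  assumes grad: "\<And>x. (U has_derivative (\<lambda>v. gU x \<bullet> v)) (at x)"
    and hess: "\<And>x. (gU has_derivative (\<lambda>v. HU x *v v)) (at x)"
    and hess_cont: "continuous_on UNIV HU"
    and h: "h > 0"
  shows "let q1 = fst (leapfrog gU h (q0, p0));
             qt = (\<lambda>t::real. q0 + t *\<^sub>R (q1 - q0))
         in ham U (leapfrog gU h (q0, p0)) - ham U (q0, p0)
          = h^2 * integral {0..1} (\<lambda>t. (p0 \<bullet> (HU (qt t) *v p0)) * (1/2 - t))
          + h^3 * integral {0..1} (\<lambda>t. (p0 \<bullet> (HU (qt t) *v gU q0)) * (t - 1/4))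
          - h^4 / 4 * integral {0..1} (\<lambda>t. (gU q0 \<bullet> (HU (qt t) *v gU q0)) * t)
          + h^4 / 8 * (norm (integral {0..1} (\<lambda>t. HU (qt t) *v p0)))^2
          - h^5 / 8 * (integral {0..1} (\<lambda>t. HU (qt t) *v gU q0) \<bullet> integral {0..1} (\<lambda>t. HU (qt t) *v p0))
          + h^6 / 32 * (norm (integral {0..1} (\<lambda>t. HU (qt t) *v gU q0)))^2"
proof -
  define g where "g = gU q0"
  define ph where "ph = p0 - (h/2) *\<^sub>R g"
  define q1 where "q1 = q0 + h *\<^sub>R ph"
  define p1 where "p1 = ph - (h/2) *\<^sub>R gU q1"
  have lf: "leapfrog gU h (q0,p0) = (q1,p1)"
    by (simp add: leapfrog_def kick_def drift_def q1_def p1_def ph_def g_def)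
  define d where "d = q1 - q0"
  have d_eq: "d = h *\<^sub>R p0 - (h^2/2) *\<^sub>R g"
    by (simp add: d_def q1_def ph_def algebra_simps power2_eq_square)
  define qt where "qt = (\<lambda>t::real. q0 + t *\<^sub>R d)"
  have q1t: "qt 1 = q1" "qt 0 = q0" by (simp_all add: qt_def d_def)
  have cq: "continuous_on UNIV (\<lambda>t. HU (qt t))"
    unfolding qt_def by (rule continuous_on_compose2[OF hess_cont]) (auto intro!: continuous_intros)
  have cPv: "\<And>v. continuous_on UNIV (\<lambda>t. HU (qt t) *v v)"
    using cont_Hv[where HU="\<lambda>t. HU (qt t)", OF cq] .
  define Pv where "Pv = (\<lambda>t. HU (qt t) *v p0)"
  define Gv where "Gv = (\<lambda>t. HU (qt t) *v g)"
  define a where "a = (\<lambda>t. p0 \<bullet> (HU (qt t) *v p0))"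
  define b where "b = (\<lambda>t. p0 \<bullet> (HU (qt t) *v g))"
  define c where "c = (\<lambda>t. g \<bullet> (HU (qt t) *v g))"
  have ca: "continuous_on UNIV a" unfolding a_def by (intro continuous_intros cPv)
  have cb: "continuous_on UNIV b" unfolding b_def by (intro continuous_intros cPv)
  have cc: "continuous_on UNIV c" unfolding c_def by (intro continuous_intros cPv)
  have cP: "continuous_on UNIV Pv" unfolding Pv_def by (rule cPv)
  have cG: "continuous_on UNIV Gv" unfolding Gv_def by (rule cPv)
  define A0 where "A0 = integral {0..1} a"
  define A1 where "A1 = integral {0..1} (\<lambda>t. a t * t)"
  define B0 where "B0 = integral {0..1} b"
  define B1 where "B1 = integral {0..1} (\<lambda>t. b t * t)"
  define C0 where "C0 = integral {0..1} c"
  define C1 where "C1 = integral {0..1} (\<lambda>t. c t * t)"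
  define P where "P = integral {0..1} Pv"
  define G where "G = integral {0..1} Gv"
  have iA0: "(a has_integral A0) {0..1}" unfolding A0_def by (rule cont_int[OF ca])
  have iB0: "(b has_integral B0) {0..1}" unfolding B0_def by (rule cont_int[OF cb])
  have iC0: "(c has_integral C0) {0..1}" unfolding C0_def by (rule cont_int[OF cc])
  have iA1: "((\<lambda>t. a t * t) has_integral A1) {0..1}" unfolding A1_def
    by (rule cont_int) (intro continuous_intros ca)
  have iB1: "((\<lambda>t. b t * t) has_integral B1) {0..1}" unfolding B1_def
    by (rule cont_int) (intro continuous_intros cb)
  have iC1: "((\<lambda>t. c t * t) has_integral C1) {0..1}" unfolding C1_def
    by (rule cont_int) (intro continuous_intros cc)
  have iP: "(Pv has_integral P) {0..1}" unfolding P_def by (rule cont_int[OF cP])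
  have iG: "(Gv has_integral G) {0..1}" unfolding G_def by (rule cont_int[OF cG])
  have sym: "\<And>t. g \<bullet> (HU (qt t) *v p0) = b t"
    using hess_sym[OF grad hess hess_cont] unfolding b_def by (metis inner_commute)
  have K1: "gU q1 - g = h *\<^sub>R P - (h^2/2) *\<^sub>R G"
  proof -
    have der: "((\<lambda>t. gU (qt t)) has_vector_derivative (HU (qt t) *v d)) (at t within {0..1})" for t
    proof -
      have "((\<lambda>t. q0 + t *\<^sub>R d) has_derivative (\<lambda>k. k *\<^sub>R d)) (at t within {0..1})"
        by (auto intro!: derivative_eq_intros)
      from has_derivative_compose[OF this hess]
      have "((\<lambda>t. gU (qt t)) has_derivative (\<lambda>k. HU (qt t) *v (k *\<^sub>R d))) (at t within {0..1})"
        by (simp add: o_def qt_def)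
      then show ?thesis unfolding has_vector_derivative_def
        by (simp add: matrix_vector_mult_scaleR)
    qed
    have i1: "((\<lambda>t. HU (qt t) *v d) has_integral (gU q1 - g)) {0..1}"
      using fundamental_theorem_of_calculus[of 0 1, OF _ der] q1t g_def by simp
    have "((\<lambda>t. h *\<^sub>R Pv t - (h^2/2) *\<^sub>R Gv t) has_integral (h *\<^sub>R P - (h^2/2) *\<^sub>R G)) {0..1}"
      by (intro has_integral_diff has_integral_cmul iP iG)
    moreover have "(\<lambda>t. h *\<^sub>R Pv t - (h^2/2) *\<^sub>R Gv t) = (\<lambda>t. HU (qt t) *v d)"
      by (auto simp: Pv_def Gv_def d_eq matrix_vector_mult_diff_distrib matrix_vector_mult_scaleR)
    ultimately show ?thesis using i1 has_integral_unique by metis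
  qed
  have pw: "(HU (qt t) *v d) \<bullet> d = h^2 * a t - h^3 * b t + h^4/4 * c t" for t
  proof -
    have e1: "(HU (qt t) *v p0) \<bullet> p0 = a t" by (simp add: a_def inner_commute)
    have e2: "(HU (qt t) *v p0) \<bullet> g = b t" using sym[of t] by (simp add: inner_commute)
    have e3: "(HU (qt t) *v g) \<bullet> p0 = b t" by (simp add: b_def inner_commute)
    have e4: "(HU (qt t) *v g) \<bullet> g = c t" by (simp add: c_def inner_commute)
    show ?thesis
      unfolding d_eq
      by (simp add: matrix_vector_mult_diff_distrib matrix_vector_mult_scaleR inner_diff_left
          inner_diff_right e1 e2 e3 e4 power2_eq_square power3_eq_cube power4_eq_xxxx algebra_simps)
  qed
  have K2: "U q1 - U q0 - g \<bullet> d = h^2 * (A0 - A1) - h^3 * (B0 - B1) + h^4/4 * (C0 - C1)"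
  proof -
    define F where "F = (\<lambda>t. U (qt t) + (1 - t) * (gU (qt t) \<bullet> d))"
    have der: "(F has_vector_derivative ((1 - t) * ((HU (qt t) *v d) \<bullet> d))) (at t within {0..1})" for t
    proof -
      have d1: "((\<lambda>s. U (qt s)) has_real_derivative (gU (qt t) \<bullet> d)) (at t within {0..1})"
        unfolding qt_def by (rule line_deriv_U[OF grad])
      have d2: "((\<lambda>s. gU (qt s) \<bullet> d) has_real_derivative ((HU (qt t) *v d) \<bullet> d)) (at t within {0..1})"
        unfolding qt_def by (rule line_deriv_gU[OF hess])
      have d3: "((\<lambda>s. 1 - s) has_real_derivative (-1)) (at t within {0..1})"
        by (auto intro!: derivative_eq_intros)
      have "(F has_real_derivative (gU (qt t) \<bullet> d + ((-1) * (gU (qt t) \<bullet> d) + ((HU (qt t) *v d) \<bullet> d) * (1 - t)))) (at t within {0..1})"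
        unfolding F_def by (intro DERIV_add DERIV_mult d1 d2 d3)
      then have "(F has_real_derivative ((1 - t) * ((HU (qt t) *v d) \<bullet> d))) (at t within {0..1})"
        by (rule DERIV_cong) (simp add: algebra_simps)
      then show ?thesis by (simp add: has_real_derivative_iff_has_vector_derivative)
    qed
    have i1: "((\<lambda>t. (1 - t) * ((HU (qt t) *v d) \<bullet> d)) has_integral (F 1 - F 0)) {0..1}"
      using fundamental_theorem_of_calculus[of 0 1, OF _ der] by simp
    have F10: "F 1 - F 0 = U q1 - U q0 - g \<bullet> d" by (simp add: F_def q1t g_def)
    have "((\<lambda>t. h^2 * (a t * (1 + (-1) * t)) - h^3 * (b t * (1 + (-1) * t)) + h^4/4 * (c t * (1 + (-1) * t)))
       has_integral (h^2 * (1 * A0 + (-1) * A1) - h^3 * (1 * B0 + (-1) * B1) + h^4/4 * (1 * C0 + (-1) * C1))) {0..1}"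
      by (intro has_integral_add has_integral_diff has_integral_mult_right lin_int iA0 iA1 iB0 iB1 iC0 iC1) simp_all
    moreover have "(\<lambda>t. h^2 * (a t * (1 + (-1) * t)) - h^3 * (b t * (1 + (-1) * t)) + h^4/4 * (c t * (1 + (-1) * t)))
       = (\<lambda>t. (1 - t) * ((HU (qt t) *v d) \<bullet> d))"
      by (rule ext, unfold pw) (simp add: algebra_simps)
    ultimately have "((\<lambda>t. (1 - t) * ((HU (qt t) *v d) \<bullet> d)) has_integral
         (h^2 * (A0 - A1) - h^3 * (B0 - B1) + h^4/4 * (C0 - C1))) {0..1}" by simp
    then show ?thesis using has_integral_unique[OF i1] F10 by simp
  qed
  have K3: "p0 \<bullet> P = A0" "p0 \<bullet> G = B0" "g \<bullet> P = B0" "g \<bullet> G = C0"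
  proof -
    have "((inner p0 \<circ> Pv) has_integral p0 \<bullet> P) {0..1}"
      by (rule has_integral_linear[OF iP bounded_linear_inner_right])
    moreover have "inner p0 \<circ> Pv = a" by (auto simp: Pv_def a_def)
    ultimately have "(a has_integral (p0 \<bullet> P)) {0..1}" by simp
    then show "p0 \<bullet> P = A0" using has_integral_unique[OF iA0] by simp
    have "((inner p0 \<circ> Gv) has_integral p0 \<bullet> G) {0..1}"
      by (rule has_integral_linear[OF iG bounded_linear_inner_right])
    moreover have "inner p0 \<circ> Gv = b" by (auto simp: Gv_def b_def)
    ultimately have "(b has_integral (p0 \<bullet> G)) {0..1}" by simp
    then show "p0 \<bullet> G = B0" using has_integral_unique[OF iB0] by simp
    have "((inner g \<circ> Pv) has_integral g \<bullet> P) {0..1}"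
      by (rule has_integral_linear[OF iP bounded_linear_inner_right])
    moreover have "inner g \<circ> Pv = b" by (auto simp: Pv_def sym)
    ultimately have "(b has_integral (g \<bullet> P)) {0..1}" by simp
    then show "g \<bullet> P = B0" using has_integral_unique[OF iB0] by simp
    have "((inner g \<circ> Gv) has_integral g \<bullet> G) {0..1}"
      by (rule has_integral_linear[OF iG bounded_linear_inner_right])
    moreover have "inner g \<circ> Gv = c" by (auto simp: Gv_def c_def)
    ultimately have "(c has_integral (g \<bullet> G)) {0..1}" by simp
    then show "g \<bullet> G = C0" using has_integral_unique[OF iC0] by simp
  qed
  have I1: "integral {0..1} (\<lambda>t. a t * (1/2 - t)) = 1/2 * A0 + (-1) * A1"
    by (rule integral_unique, rule lin_int[OF iA0 iA1]) simp
  have I2: "integral {0..1} (\<lambda>t. b t * (t - 1/4)) = (-1/4) * B0 + 1 * B1"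
    by (rule integral_unique, rule lin_int[OF iB0 iB1]) simp
  have I3: "integral {0..1} (\<lambda>t. c t * t) = C1" by (simp add: C1_def)
  have p1_eq: "p1 = p0 - h *\<^sub>R g - (h^2/2) *\<^sub>R P + (h^3/4) *\<^sub>R G"
  proof -
    have gq: "gU q1 = g + h *\<^sub>R P - (h^2/2) *\<^sub>R G" using K1 by (simp add: algebra_simps)
    have hg: "(h/2) *\<^sub>R g + (h/2) *\<^sub>R g = h *\<^sub>R g"
      by (simp add: scaleR_add_left[symmetric])
    have hG: "(h/2) *\<^sub>R ((h^2/2) *\<^sub>R G) = (h^3/4) *\<^sub>R G"
      by (simp add: power2_eq_square power3_eq_cube)
    have hP: "(h/2) *\<^sub>R (h *\<^sub>R P) = (h^2/2) *\<^sub>R P"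
      by (simp add: power2_eq_square)
    show ?thesis unfolding p1_def ph_def gq
      by (simp add: scaleR_diff_right scaleR_add_right hG hP hg[symmetric] diff_add_eq_diff_diff_swap power2_eq_square power3_eq_cube)
  qed
  have gd: "g \<bullet> d = h * (p0 \<bullet> g) - h^2/2 * (g \<bullet> g)"
    unfolding d_eq by (simp add: inner_diff_right inner_commute)
  have np1: "(norm p1)^2 = p1 \<bullet> p1" by (simp add: power2_norm_eq_inner)
  have np0: "(norm p0)^2 = p0 \<bullet> p0" by (simp add: power2_norm_eq_inner)
  have nP: "(norm P)^2 = P \<bullet> P" by (simp add: power2_norm_eq_inner)
  have nG: "(norm G)^2 = G \<bullet> G" by (simp add: power2_norm_eq_inner)
  have Uq: "U q1 = U q0 + (h * (p0 \<bullet> g) - h^2/2 * (g \<bullet> g)) + (h^2 * (A0 - A1) - h^3 * (B0 - B1) + h^4/4 * (C0 - C1))"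
    using K2 gd by simp
  have PP: "p1 \<bullet> p1 = p0 \<bullet> p0 + h^2*(g \<bullet> g) + (h^2/2)^2*(P \<bullet> P) + (h^3/4)^2*(G \<bullet> G) - 2*h*(p0 \<bullet> g)
     - 2*(h^2/2)*A0 + 2*(h^3/4)*B0 + 2*h*(h^2/2)*B0 - 2*h*(h^3/4)*C0 - 2*(h^2/2)*(h^3/4)*(G \<bullet> P)"
    unfolding p1_eq quad4 K3 by (simp add: inner_commute[of P G])
  have main: "U q1 + (norm p1)^2 / 2 - (U q0 + (norm p0)^2 / 2)
     = h^2 * (1/2 * A0 + (-1) * A1) + h^3 * ((-1/4) * B0 + 1 * B1) - h^4/4 * C1
       + h^4/8 * (norm P)^2 - h^5/8 * (G \<bullet> P) + h^6/32 * (norm G)^2"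
    unfolding np1 np0 nP nG by (rule arith_final[OF Uq PP])
  have fa: "\<And>t. p0 \<bullet> (HU (qt t) *v p0) = a t" by (simp add: a_def)
  have fb: "\<And>t. p0 \<bullet> (HU (qt t) *v g) = b t" by (simp add: b_def)
  have fc: "\<And>t. g \<bullet> (HU (qt t) *v g) = c t" by (simp add: c_def)
  have fq: "\<And>t. q0 + t *\<^sub>R d = qt t" by (simp add: qt_def)
  show ?thesis
    unfolding Let_def lf fst_conv d_def[symmetric] fq g_def[symmetric]
    unfolding fa fb fc
    unfolding Pv_def[symmetric] Gv_def[symmetric] P_def[symmetric] G_def[symmetric]
    unfolding I1 I2 I3
    using main by (simp add: ham_def)
qed

end
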